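(* Let $M$ be an OHFM in $\mathcal{C}$ and let $V=\mathbb{R}\otimes_\mathbb{Z}\mathrm{gp}(M)$. Let $\mathcal{N}$ be the set of faces $F$ of $\mathsf{cone}_V(M)$ such that the face submonoid $M\cap F$ is not a UFM. Then either $\mathcal{N}=\emptyset$, or there is a face $F_0$ of $\mathsf{cone}_V(M)$ such that $\mathcal{N}=\{F : F \text{ a face of } \mathsf{cone}_V(M),\ F_0\subseteq F\}$, i.e., $\mathcal{N}$ is the interval $[F_0,\mathsf{cone}_V(M)]$ of the face lattice.
   Context: Convention: all monoids are commutative, cancellative, and reduced, written additively; atoms $\mathcal{A}(M)=M^\bullet\setminus(M^\bullet+M^\bullet)$ with $M^\bullet=M\setminus\{0\}$. $\mathcal{C}$ is the class of monoids isomorphic to a submonoid of a free commutative monoid of finite rank (equivalently, of $(\mathbb{N}^d,+)$). $M$ is regarded as a submonoid of $V$; $\mathsf{cone}_V(M)$ is the set of finite nonnegative linear combinations of elements of $M$. A face of a cone $C$ is a cone $F\subseteq C$ such that whenever $x,y\in C$ and $F$ meets the open segment between $x$ and $y$, then $x,y\in F$; the face lattice is the set of faces ordered by inclusion; a face submonoid is $M\cap F$ for a face $F$. A factorization of $x$ is a multiset of atoms summing to $x$, its length the number of atoms with multiplicity. UFM: every element has exactly one factorization. OHFM: every element has a factorization and for each nonzero $x$, two factorizations of $x$ of equal length coincide. *)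

theory Defs
  imports "HOL-Analysis.Analysis" "HOL-Library.Multiset"
begin

definition submonoid :: "'a::comm_monoid_add set \<Rightarrow> bool" where
  "submonoid M \<longleftrightarrow> 0 \<in> M \<and> (\<forall>x\<in>M. \<forall>y\<in>M. x + y \<in> M)"

definition atoms :: "'a::comm_monoid_add set \<Rightarrow> 'a set" where
  "atoms M = {a \<in> M - {0}. \<not> (\<exists>x\<in>M - {0}. \<exists>y\<in>M - {0}. a = x + y)}"

definition is_factorization :: "'a::comm_monoid_add set \<Rightarrow> 'a \<Rightarrow> 'a multiset \<Rightarrow> bool" where
  "is_factorization M x f \<longleftrightarrow> set_mset f \<subseteq> atoms M \<and> sum_mset f = x"

definition UFM :: "'a::comm_monoid_add set \<Rightarrow> bool" where
  "UFM M \<longleftrightarrow> (\<forall>x\<in>M. \<exists>!f. is_factorization M x f)"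

definition OHFM :: "'a::comm_monoid_add set \<Rightarrow> bool" where
  "OHFM M \<longleftrightarrow> (\<forall>x\<in>M. \<exists>f. is_factorization M x f) \<and>
     (\<forall>x\<in>M - {0}. \<forall>f g. is_factorization M x f \<and> is_factorization M x g \<and> size f = size g
        \<longrightarrow> f = g)"

definition cone_of :: "'a::real_vector set \<Rightarrow> 'a set" where
  "cone_of M = {y. \<exists>S c. finite S \<and> S \<subseteq> M \<and> (\<forall>x\<in>S. c x \<ge> (0::real)) \<and>
                        y = (\<Sum>x\<in>S. c x *\<^sub>R x)}"

definition cone_face :: "'a::real_vector set \<Rightarrow> 'a set \<Rightarrow> bool" where
  "cone_face F C \<longleftrightarrow> convex_cone F \<and> F \<subseteq> C \<and>
     (\<forall>x\<in>C. \<forall>y\<in>C. (\<exists>z\<in>F. z \<in> open_segment x y) \<longrightarrow> x \<in> F \<and> y \<in> F)"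

end

theory Submission imports Defs begin

lemma cone_of_convex_cone: "convex_cone (cone_of M)"
proof -
  have z: "0 \<in> cone_of M" unfolding cone_of_def by (rule CollectI, rule exI[of _ "{}"]) auto
  have sc: "c *\<^sub>R y \<in> cone_of M" if "y \<in> cone_of M" "c \<ge> 0" for y c
  proof -
    from that obtain S d where S: "finite S" "S \<subseteq> M" "\<forall>x\<in>S. d x \<ge> 0" "y = (\<Sum>x\<in>S. d x *\<^sub>R x)"
      unfolding cone_of_def by blast
    have "c *\<^sub>R y = (\<Sum>x\<in>S. (c * d x) *\<^sub>R x)" using S(4) by (simp add: scaleR_sum_right)
    moreover have "\<forall>x\<in>S. c * d x \<ge> 0" using S(3) that(2) by simp
    ultimately show ?thesis using S unfolding cone_of_def
      by (intro CollectI exI[of _ S] exI[of _ "\<lambda>x. c * d x"]) auto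
  qed
  have ad: "y + w \<in> cone_of M" if "y \<in> cone_of M" "w \<in> cone_of M" for y w
  proof -
    from that(1) obtain S d where S: "finite S" "S \<subseteq> M" "\<forall>x\<in>S. d x \<ge> 0" "y = (\<Sum>x\<in>S. d x *\<^sub>R x)"
      unfolding cone_of_def by blast
    from that(2) obtain T e where T: "finite T" "T \<subseteq> M" "\<forall>x\<in>T. e x \<ge> 0" "w = (\<Sum>x\<in>T. e x *\<^sub>R x)"
      unfolding cone_of_def by blast
    define d' where "d' x = (if x \<in> S then d x else 0)" for x
    define e' where "e' x = (if x \<in> T then e x else 0)" for x
    have 1: "y = (\<Sum>x\<in>S\<union>T. d' x *\<^sub>R x)"
      unfolding S(4) d'_def by (rule sum.mono_neutral_cong_left) (use S T in auto)
    have 2: "w = (\<Sum>x\<in>S\<union>T. e' x *\<^sub>R x)"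
      unfolding T(4) e'_def by (rule sum.mono_neutral_cong_left) (use S T in auto)
    have "y + w = (\<Sum>x\<in>S\<union>T. (d' x + e' x) *\<^sub>R x)"
      unfolding 1 2 by (simp add: sum.distrib scaleR_add_left)
    moreover have "\<forall>x\<in>S\<union>T. d' x + e' x \<ge> 0" using S(3) T(3) by (auto simp: d'_def e'_def)
    ultimately show ?thesis using S T unfolding cone_of_def
      by (intro CollectI exI[of _ "S \<union> T"] exI[of _ "\<lambda>x. d' x + e' x"]) auto
  qed
  have cn: "conic (cone_of M)" unfolding conic_def using sc by blast
  have cv: "convex (cone_of M)" unfolding convex_def
  proof (intro ballI allI impI)
    fix x y and u v :: real assume "x \<in> cone_of M" "y \<in> cone_of M" "0 \<le> u" "0 \<le> v" "u + v = 1"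
    then show "u *\<^sub>R x + v *\<^sub>R y \<in> cone_of M" by (intro ad sc)
  qed
  show ?thesis unfolding convex_cone_def using cn cv z by blast
qed

lemma M_sub_cone: "M \<subseteq> cone_of M"
proof
  fix x assume "x \<in> M"
  then show "x \<in> cone_of M" unfolding cone_of_def
    by (intro CollectI exI[of _ "{x}"] exI[of _ "\<lambda>_. 1::real"]) auto
qed

lemma face_self: "cone_face (cone_of M) (cone_of M)"
  unfolding cone_face_def using cone_of_convex_cone by auto

lemma face_add:
  assumes "cone_face F C" "a \<in> C" "b \<in> C" "a + b \<in> F"
  shows "a \<in> F \<and> b \<in> F"
proof -
  have cc: "convex_cone F" using assms(1) unfolding cone_face_def by auto
  have m: "midpoint a b \<in> F" unfolding midpoint_def
    using convex_cone_scaleR[OF cc, of "inverse 2" "a+b"] assms(4) by simp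
  show ?thesis
  proof (cases "a = b")
    case True then show ?thesis using m by simp
  next
    case False
    then have "midpoint a b \<in> open_segment a b" by simp
    then show ?thesis using assms(1-3) m unfolding cone_face_def by blast
  qed
qed

lemma sum_in_M: "submonoid M \<Longrightarrow> set_mset f \<subseteq> M \<Longrightarrow> sum_mset f \<in> M"
  by (induction f) (auto simp: submonoid_def)

lemma sum_in_F: "convex_cone F \<Longrightarrow> set_mset f \<subseteq> F \<Longrightarrow> sum_mset f \<in> F"
  by (induction f) (auto intro: convex_cone_add convex_cone_contains_0)

lemma face_sum_elems:
  assumes "submonoid M" "cone_face F (cone_of M)"
  shows "set_mset f \<subseteq> M \<Longrightarrow> sum_mset f \<in> F \<Longrightarrow> set_mset f \<subseteq> F"
proof (induction f)
  case empty then show ?case by simp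
next
  case (add a g)
  have "a \<in> cone_of M" using add.prems M_sub_cone by auto
  moreover have "sum_mset g \<in> cone_of M" using add.prems M_sub_cone sum_in_M[OF assms(1)] by auto
  ultimately have "a \<in> F \<and> sum_mset g \<in> F" using face_add[OF assms(2)] add.prems by auto
  then show ?case using add by auto
qed

lemma atoms_face:
  assumes "cone_face F (cone_of M)"
  shows "atoms (M \<inter> F) = atoms M \<inter> F"
proof
  show "atoms (M \<inter> F) \<subseteq> atoms M \<inter> F"
  proof
    fix a assume a: "a \<in> atoms (M \<inter> F)"
    have "\<not> (\<exists>x\<in>M - {0}. \<exists>y\<in>M - {0}. a = x + y)"
    proof
      assume "\<exists>x\<in>M - {0}. \<exists>y\<in>M - {0}. a = x + y"
      then obtain x y where xy: "x \<in> M - {0}" "y \<in> M - {0}" "a = x + y" by blast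
      then have "x \<in> F \<and> y \<in> F" using face_add[OF assms, of x y] a M_sub_cone
        unfolding atoms_def by auto
      then show False using a xy unfolding atoms_def by auto
    qed
    then show "a \<in> atoms M \<inter> F" using a unfolding atoms_def by auto
  qed
  show "atoms M \<inter> F \<subseteq> atoms (M \<inter> F)" unfolding atoms_def by auto
qed


lemma nat_nonneg: "(r::real) \<in> \<nat> \<Longrightarrow> 0 \<le> r"
  by (erule Nats_cases) simp

lemma sum_atoms_nonzero:
  fixes M :: "(real ^ 'd::finite) set"
  assumes sm: "submonoid M" and nat: "\<forall>x\<in>M. \<forall>i. x $ i \<in> \<nat>"
    and f: "set_mset f \<subseteq> atoms M" "f \<noteq> {#}"
  shows "sum_mset f \<noteq> 0"
proof -
  define s where "s x = (\<Sum>i\<in>UNIV. x $ i)" for x :: "real ^ 'd"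
  have sadd: "s (x + y) = s x + s y" for x y by (simp add: s_def sum.distrib)
  have nn: "s x \<ge> 0" if "x \<in> M" for x
    unfolding s_def using nat that nat_nonneg by (intro sum_nonneg) blast
  have pos: "s x > 0" if xM: "x \<in> M" and x0: "x \<noteq> 0" for x
  proof -
    obtain i where i: "x $ i \<noteq> 0" using x0 by (metis vec_eq_iff zero_index)
    have ge: "\<forall>j. x $ j \<ge> 0" using nat xM nat_nonneg by blast
    have "x $ i > 0" using i ge[rule_format, of i] by linarith
    moreover have "x $ i \<le> s x" unfolding s_def
      using member_le_sum[of i UNIV "\<lambda>j. x $ j"] ge by auto
    ultimately show ?thesis by simp
  qed
  obtain a g where g: "f = add_mset a g" using f(2) by (metis multiset_cases)
  have a: "a \<in> M" "a \<noteq> 0" using f(1) g unfolding atoms_def by auto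
  have "sum_mset g \<in> M" using sum_in_M[OF sm] f(1) g unfolding atoms_def by auto
  then have "s (sum_mset f) > 0" using g sadd pos[OF a] nn by (simp add: add_pos_nonneg)
  then show ?thesis unfolding s_def by auto
qed

definition rel :: "(real ^ 'd::finite) set \<Rightarrow> (real^'d) multiset \<Rightarrow> (real^'d) multiset \<Rightarrow> bool" where
  "rel M p q \<longleftrightarrow> set_mset p \<subseteq> atoms M \<and> set_mset q \<subseteq> atoms M \<and> sum_mset p = sum_mset q \<and> p \<noteq> q"

lemma atoms_sub: "atoms M \<subseteq> M" unfolding atoms_def by auto

lemma rel_size:
  fixes M :: "(real ^ 'd::finite) set"
  assumes sm: "submonoid M" and nat: "\<forall>x\<in>M. \<forall>i. x $ i \<in> \<nat>" and oh: "OHFM M"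
    and r: "rel M p q"
  shows "size p \<noteq> size q"
proof
  assume sz: "size p = size q"
  have inM: "sum_mset p \<in> M" using sum_in_M[OF sm] r atoms_sub unfolding rel_def by blast
  show False
  proof (cases "p = {#}")
    case True
    then have "q = {#}" using sz by simp
    then show False using True r unfolding rel_def by simp
  next
    case False
    then have "sum_mset p \<noteq> 0" using sum_atoms_nonzero[OF sm nat] r unfolding rel_def by blast
    then show False using oh inM sz r unfolding OHFM_def rel_def is_factorization_def by auto
  qed
qed

lemma set_repeat: "set_mset (repeat_mset n p) \<subseteq> set_mset p"
  by (metis count_repeat_mset mult_0_right count_eq_zero_iff subsetI)

lemma sum_repeat_eq: "sum_mset p = sum_mset q \<Longrightarrow> sum_mset (repeat_mset n p) = sum_mset (repeat_mset n q)"
  by (induction n) auto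

lemma rel_D_oriented:
  fixes M :: "(real ^ 'd::finite) set"
  assumes sm: "submonoid M" and nat: "\<forall>x\<in>M. \<forall>i. x $ i \<in> \<nat>" and oh: "OHFM M"
    and r1: "rel M p q" and r2: "rel M p' q'" and l1: "size p < size q" and l2: "size p' < size q'"
  shows "{a. count p a \<noteq> count q a} = {a. count p' a \<noteq> count q' a}"
proof -
  define d1 where "d1 = size q - size p"
  define d2 where "d2 = size q' - size p'"
  have d: "d1 > 0" "d2 > 0" using l1 l2 by (auto simp: d1_def d2_def)
  define A where "A = repeat_mset d2 p + repeat_mset d1 q'"
  define B where "B = repeat_mset d2 q + repeat_mset d1 p'"
  have "set_mset A \<subseteq> set_mset p \<union> set_mset q'" unfolding A_def
    using set_repeat[of d2 p] set_repeat[of d1 q'] by auto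
  moreover have "set_mset B \<subseteq> set_mset q \<union> set_mset p'" unfolding B_def
    using set_repeat[of d2 q] set_repeat[of d1 p'] by auto
  ultimately have sA: "set_mset A \<subseteq> atoms M" "set_mset B \<subseteq> atoms M"
    using r1 r2 unfolding rel_def by blast+
  have sum: "sum_mset A = sum_mset B"
    using sum_repeat_eq[of p q d2] sum_repeat_eq[of p' q' d1] r1 r2
    unfolding A_def B_def rel_def by (simp add: add.commute)
  have e1: "size q = size p + d1" and e2: "size q' = size p' + d2"
    using l1 l2 unfolding d1_def d2_def by auto
  have size: "size A = size B"
    unfolding A_def B_def by (simp add: e1 e2 algebra_simps)
  have "q' \<noteq> {#}" using l2 by auto
  then have "A \<noteq> {#}" using d unfolding A_def by (simp add: repeat_mset_eq_empty_iff)
  then have nz: "sum_mset A \<noteq> 0" using sum_atoms_nonzero[OF sm nat sA(1)] by blast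
  have inM: "sum_mset A \<in> M" using sum_in_M[OF sm] sA atoms_sub by blast
  have oh2: "\<forall>x\<in>M - {0}. \<forall>f g. is_factorization M x f \<and> is_factorization M x g \<and> size f = size g
        \<longrightarrow> f = g" using oh unfolding OHFM_def by blast
  have fA: "is_factorization M (sum_mset A) A" "is_factorization M (sum_mset A) B"
    using sA sum unfolding is_factorization_def by auto
  have AB: "A = B" using oh2 inM nz fA size by blast
  have c: "d2 * count p a + d1 * count q' a = d2 * count q a + d1 * count p' a" for a
    using arg_cong[OF AB, of "\<lambda>X. count X a"] unfolding A_def B_def by simp
  show ?thesis
  proof (intro set_eqI iffI; simp)
    fix a assume ne: "count p a \<noteq> count q a"
    show "count p' a \<noteq> count q' a"
    proof
      assume eq: "count p' a = count q' a"
      have "d2 * count p a = d2 * count q a" using c[of a] unfolding eq by simp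
      then show False using ne d by simp
    qed
  next
    fix a assume ne: "count p' a \<noteq> count q' a"
    show "count p a \<noteq> count q a"
    proof
      assume eq: "count p a = count q a"
      have "d1 * count q' a = d1 * count p' a" using c[of a] unfolding eq by simp
      then show False using ne d by simp
    qed
  qed
qed


lemma rel_sym: "rel M p q \<Longrightarrow> rel M q p" unfolding rel_def by auto

lemma rel_D:
  fixes M :: "(real ^ 'd::finite) set"
  assumes sm: "submonoid M" and nat: "\<forall>x\<in>M. \<forall>i. x $ i \<in> \<nat>" and oh: "OHFM M"
    and r1: "rel M p q" and r2: "rel M p' q'"
  shows "{a. count p a \<noteq> count q a} = {a. count p' a \<noteq> count q' a}"
proof -
  have s1: "size p \<noteq> size q" and s2: "size p' \<noteq> size q'"
    using rel_size[OF sm nat oh] r1 r2 by auto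
  have e1: "{a. count p a \<noteq> count q a} = {a. count q a \<noteq> count p a}" by auto
  have e2: "{a. count p' a \<noteq> count q' a} = {a. count q' a \<noteq> count p' a}" by auto
  show ?thesis
  proof (cases "size p < size q")
    case True
    show ?thesis
    proof (cases "size p' < size q'")
      case True
      then show ?thesis using rel_D_oriented[OF sm nat oh r1 r2] \<open>size p < size q\<close> by auto
    next
      case False
      then have "size q' < size p'" using s2 by auto
      then show ?thesis using rel_D_oriented[OF sm nat oh r1 rel_sym[OF r2]] \<open>size p < size q\<close> e2 by auto
    qed
  next
    case False
    then have l: "size q < size p" using s1 by auto
    show ?thesis
    proof (cases "size p' < size q'")
      case True
      then show ?thesis using rel_D_oriented[OF sm nat oh rel_sym[OF r1] r2] l e1 by auto
    next
      case False
      then have "size q' < size p'" using s2 by auto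
      then show ?thesis using rel_D_oriented[OF sm nat oh rel_sym[OF r1] rel_sym[OF r2]] l e1 e2 by auto
    qed
  qed
qed

lemma fact_in_face:
  fixes M :: "(real ^ 'd::finite) set"
  assumes sm: "submonoid M" and oh: "OHFM M" and F: "cone_face F (cone_of M)"
    and x: "x \<in> M \<inter> F"
  obtains f where "is_factorization M x f" "is_factorization (M \<inter> F) x f"
proof -
  obtain f where f: "is_factorization M x f" using oh x unfolding OHFM_def by blast
  then have "set_mset f \<subseteq> F" using face_sum_elems[OF sm F, of f] x atoms_sub
    unfolding is_factorization_def by blast
  then have "is_factorization (M \<inter> F) x f" using f atoms_face[OF F]
    unfolding is_factorization_def by auto
  then show ?thesis using f that by blast
qed

theorem mainTheorem12:
  fixes M :: "(real ^ 'd::finite) set"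
  assumes "submonoid M"
    and "\<forall>x\<in>M. \<forall>i. x $ i \<in> \<nat>"
    and "OHFM M"
  defines "N \<equiv> {F. cone_face F (cone_of M) \<and> \<not> UFM (M \<inter> F)}"
  shows "N = {} \<or>
         (\<exists>F0. cone_face F0 (cone_of M) \<and> N = {F. cone_face F (cone_of M) \<and> F0 \<subseteq> F})"
proof -
  note sm = assms(1) and nat = assms(2) and oh = assms(3)
  let ?C = "cone_of M"
  have nonufm: "\<exists>f g. rel M f g \<and> set_mset f \<subseteq> F \<and> set_mset g \<subseteq> F"
    if F: "cone_face F ?C" and nu: "\<not> UFM (M \<inter> F)" for F
  proof -
    obtain x where x: "x \<in> M \<inter> F" and nx: "\<not> (\<exists>!f. is_factorization (M \<inter> F) x f)"
      using nu unfolding UFM_def by blast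
    obtain f where f1: "is_factorization M x f" and f2: "is_factorization (M \<inter> F) x f"
      using fact_in_face[OF sm oh F x] by blast
    obtain g where g: "is_factorization (M \<inter> F) x g" "g \<noteq> f" using nx f2 by blast
    have "rel M f g" using f2 g atoms_face[OF F] unfolding rel_def is_factorization_def by auto
    moreover have "set_mset f \<subseteq> F" "set_mset g \<subseteq> F" using f2 g atoms_face[OF F]
      unfolding is_factorization_def by auto
    ultimately show ?thesis by blast
  qed
  show ?thesis
  proof (cases "\<exists>p q. rel M p q")
    case False
    have "N = {}"
    proof (rule ccontr)
      assume "N \<noteq> {}"
      then obtain F where "cone_face F ?C" "\<not> UFM (M \<inter> F)" unfolding N_def by blast
      then show False using nonufm False by blast
    qed
    then show ?thesis by blast
  next
    case True
    then obtain p q where r: "rel M p q" by blast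
    define D where "D = {a. count p a \<noteq> count q a}"
    have DM: "D \<subseteq> M"
    proof
      fix a assume "a \<in> D"
      then have "a \<in># p \<or> a \<in># q" unfolding D_def using not_in_iff[of a p] not_in_iff[of a q] by auto
      then show "a \<in> M" using r atoms_sub unfolding rel_def by blast
    qed
    have key: "F \<in> N \<longleftrightarrow> D \<subseteq> F" if F: "cone_face F ?C" for F
    proof
      assume "F \<in> N"
      then obtain f g where fg: "rel M f g" "set_mset f \<subseteq> F" "set_mset g \<subseteq> F"
        using nonufm F unfolding N_def by blast
      have "D = {a. count f a \<noteq> count g a}" unfolding D_def by (rule rel_D[OF sm nat oh r fg(1)])
      moreover have "a \<in># f \<or> a \<in># g" if "count f a \<noteq> count g a" for a
        using that not_in_iff[of a f] not_in_iff[of a g] by auto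
      ultimately show "D \<subseteq> F" using fg(2,3) by blast
    next
      assume DF: "D \<subseteq> F"
      define p' where "p' = p - q"
      define q' where "q' = q - p"
      define i where "i = p \<inter># q"
      have pp: "p = p' + i" unfolding p'_def i_def by (rule multiset_eqI) auto
      have qq: "q = q' + i" unfolding q'_def i_def by (rule multiset_eqI) auto
      have ne: "p' \<noteq> q'" using r pp qq unfolding rel_def by auto
      have sum: "sum_mset p' = sum_mset q'" using r pp qq unfolding rel_def by simp
      have sp: "set_mset p' \<subseteq> D" "set_mset q' \<subseteq> D" unfolding p'_def q'_def D_def
        by (auto simp: in_diff_count)
      have ap: "set_mset p' \<subseteq> atoms M" "set_mset q' \<subseteq> atoms M"
        using r unfolding rel_def p'_def q'_def by (auto dest: in_diffD)
      have cc: "convex_cone F" using F unfolding cone_face_def by auto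
      have xin: "sum_mset p' \<in> M \<inter> F"
        using sum_in_M[OF sm] sum_in_F[OF cc] ap sp DF atoms_sub by blast
      have "is_factorization (M \<inter> F) (sum_mset p') p'" "is_factorization (M \<inter> F) (sum_mset p') q'"
        using ap sp DF sum atoms_face[OF F] unfolding is_factorization_def by auto
      then have "\<not> UFM (M \<inter> F)" using xin ne unfolding UFM_def by blast
      then show "F \<in> N" using F unfolding N_def by blast
    qed
    define Fam where "Fam = {F. cone_face F ?C \<and> D \<subseteq> F}"
    define F0 where "F0 = \<Inter> Fam"
    have CinFam: "?C \<in> Fam" unfolding Fam_def using face_self DM M_sub_cone by blast
    have F0face: "cone_face F0 ?C"
      unfolding cone_face_def
    proof (intro conjI ballI impI)
      show "convex_cone F0" unfolding F0_def
        by (rule convex_cone_Inter) (auto simp: Fam_def cone_face_def)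
      show "F0 \<subseteq> ?C" unfolding F0_def using CinFam by blast
    next
      fix x y assume xy: "x \<in> ?C" "y \<in> ?C" and z: "\<exists>z\<in>F0. z \<in> open_segment x y"
      obtain z where zF0: "z \<in> F0" and zs: "z \<in> open_segment x y" using z by blast
      have "x \<in> F \<and> y \<in> F" if FF: "F \<in> Fam" for F
      proof -
        have Ff: "cone_face F ?C" using FF unfolding Fam_def by blast
        have "z \<in> F" using zF0 FF unfolding F0_def by blast
        then show ?thesis using Ff xy zs unfolding cone_face_def by blast
      qed
      then show "x \<in> F0" "y \<in> F0" unfolding F0_def by auto
    qed
    have DF0: "D \<subseteq> F0" unfolding F0_def Fam_def by blast
    have "N = {F. cone_face F ?C \<and> F0 \<subseteq> F}"
    proof (intro set_eqI iffI)
      fix F assume "F \<in> N"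
      then have "cone_face F ?C" "D \<subseteq> F" using key unfolding N_def by blast+
      then show "F \<in> {F. cone_face F ?C \<and> F0 \<subseteq> F}" unfolding F0_def Fam_def by blast
    next
      fix F assume "F \<in> {F. cone_face F ?C \<and> F0 \<subseteq> F}"
      then show "F \<in> N" using key DF0 by blast
    qed
    then show ?thesis using F0face by blast
  qed
qed

end
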